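(* Let $A\in\mathbb R^{m\times n}$, $W\in\mathbb R^{k\times n}$ and $\alpha>0$. For $y\in\mathbb R^m$ let $\hat x(y)\subset\mathbb R^n$ be the set of minimizers of $x\mapsto\|Ax-y\|_2^2+\alpha\|Wx\|_1$. Then the set-valued map $y\mapsto\hat x(y)$ is Hausdorff Lipschitz continuous: there exists $\kappa>0$ such that $$\hat x(\tilde y)\subset\hat x(y)+\kappa\|y-\tilde y\|_2\,B_1(0)\qquad\text{for all }y,\tilde y\in\mathbb R^m.$$
   Context: $B_1(0)$ denotes the closed Euclidean unit ball in $\mathbb R^n$; $\|\cdot\|_1$ and $\|\cdot\|_2$ denote the $\ell^1$- and Euclidean norms. *)

theory Defs
  imports "HOL-Analysis.Analysis"
begin

definition l1norm :: "real ^ 'k \<Rightarrow> real" where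
  "l1norm v = (\<Sum>i\<in>UNIV. \<bar>v $ i\<bar>)"

definition lasso_obj ::
  "real ^ 'n ^ 'm \<Rightarrow> real ^ 'n ^ 'k \<Rightarrow> real \<Rightarrow> real ^ 'm \<Rightarrow> real ^ 'n \<Rightarrow> real" where
  "lasso_obj A W \<alpha> y x = (norm (A *v x - y))\<^sup>2 + \<alpha> * l1norm (W *v x)"

definition lasso_minimizers ::
  "real ^ 'n ^ 'm \<Rightarrow> real ^ 'n ^ 'k \<Rightarrow> real \<Rightarrow> real ^ 'm \<Rightarrow> (real ^ 'n) set" where
  "lasso_minimizers A W \<alpha> y = {x. \<forall>z. lasso_obj A W \<alpha> y x \<le> lasso_obj A W \<alpha> y z}"

end

theory Submission
  imports Defs "HOL-Analysis.Analysis"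
begin

lemma cone_bound:
  fixes a :: "'i \<Rightarrow> 'v::euclidean_space" and J :: "'i set"
  assumes fin: "finite J"
  shows "\<exists>c>0. \<forall>d. (\<forall>v. (\<forall>i\<in>J. a i \<bullet> v \<le> 0) \<longrightarrow> d \<bullet> v \<le> 0) \<longrightarrow>
            norm d \<le> c * (\<Sum>i\<in>J. max 0 (a i \<bullet> d))"
proof -
  define N where "N = {d. \<forall>v. (\<forall>i\<in>J. a i \<bullet> v \<le> 0) \<longrightarrow> d \<bullet> v \<le> 0}"
  define G where "G = (\<lambda>d. \<Sum>i\<in>J. max 0 (a i \<bullet> d))"
  have Nscale: "(1 / norm d) *\<^sub>R d \<in> N" if "d \<in> N" for d
    using that by (auto simp: N_def intro!: divide_nonpos_nonneg)
  have closedN: "closed N"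
  proof -
    have "N = (\<Inter>v\<in>{v. \<forall>i\<in>J. a i \<bullet> v \<le> 0}. {d. v \<bullet> d \<le> 0})"
      by (auto simp: N_def inner_commute)
    then show ?thesis by (auto intro!: closed_INT closed_halfspace_le)
  qed
  define S where "S = N \<inter> sphere 0 1"
  have cS: "compact S" unfolding S_def
    by (intro closed_Int_compact closedN compact_sphere)
  have G0: "G d \<ge> 0" for d unfolding G_def by (intro sum_nonneg) auto
  have Gscale: "G (t *\<^sub>R d) = t * G d" if "t \<ge> 0" for t d
    unfolding G_def sum_distrib_left
    by (intro sum.cong refl) (use that in \<open>auto simp: max_def mult_le_0_iff zero_le_mult_iff\<close>)
  show ?thesis
  proof (cases "S = {}")
    case True
    have "d = 0" if "d \<in> N" for d
    proof (rule ccontr)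
      assume "d \<noteq> 0"
      then have "(1 / norm d) *\<^sub>R d \<in> S" using Nscale[OF that] by (simp add: S_def)
      with True show False by simp
    qed
    then show ?thesis
    proof (intro exI[of _ 1] conjI allI impI)
      fix d assume "\<forall>v. (\<forall>i\<in>J. a i \<bullet> v \<le> 0) \<longrightarrow> d \<bullet> v \<le> 0"
      then have "d = 0" using \<open>\<And>d. d \<in> N \<Longrightarrow> d = 0\<close> by (auto simp: N_def)
      then show "norm d \<le> 1 * (\<Sum>i\<in>J. max 0 (a i \<bullet> d))" by simp
    qed simp
  next
    case False
    have contG: "continuous_on S G" unfolding G_def by (intro continuous_intros)
    obtain d0 where d0: "d0 \<in> S" "\<And>y. y \<in> S \<Longrightarrow> G d0 \<le> G y"
      using continuous_attains_inf[OF cS False contG] by blast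
    have Gpos: "G d0 > 0"
    proof (rule ccontr)
      assume "\<not> G d0 > 0"
      then have "G d0 = 0" using G0[of d0] by simp
      then have "\<forall>i\<in>J. max 0 (a i \<bullet> d0) = 0"
        unfolding G_def using fin by (subst (asm) sum_nonneg_eq_0_iff) auto
      then have "\<forall>i\<in>J. a i \<bullet> d0 \<le> 0" by (metis max.cobounded2)
      then have "d0 \<bullet> d0 \<le> 0" using d0(1) by (auto simp: S_def N_def)
      then have "d0 = 0" by (metis inner_gt_zero_iff not_le)
      then show False using d0(1) by (simp add: S_def)
    qed
    show ?thesis
    proof (intro exI[of _ "1 / G d0"] conjI allI impI)
      show "1 / G d0 > 0" using Gpos by simp
      fix d assume dN: "\<forall>v. (\<forall>i\<in>J. a i \<bullet> v \<le> 0) \<longrightarrow> d \<bullet> v \<le> 0"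
      show "norm d \<le> 1 / G d0 * (\<Sum>i\<in>J. max 0 (a i \<bullet> d))"
      proof (cases "d = 0")
        case True then show ?thesis using Gpos by (simp add: sum_nonneg)
      next
        case False
        have "(1 / norm d) *\<^sub>R d \<in> S" using Nscale[of d] dN False by (simp add: S_def N_def)
        then have "G d0 \<le> G ((1 / norm d) *\<^sub>R d)" using d0 by blast
        also have "\<dots> = G d / norm d" by (subst Gscale) auto
        finally have "G d0 * norm d \<le> G d" using False by (simp add: field_simps)
        then show ?thesis using Gpos by (simp add: G_def field_simps)
      qed
    qed
  qed
qed

lemma hoffman:
  fixes a :: "'i::finite \<Rightarrow> 'v::euclidean_space"
  shows "\<exists>H>0. \<forall>b x. (\<exists>z. \<forall>i. a i \<bullet> z \<le> b i) \<longrightarrow>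
     (\<exists>z. (\<forall>i. a i \<bullet> z \<le> b i) \<and> norm (x - z) \<le> H * (\<Sum>i\<in>UNIV. max 0 (a i \<bullet> x - b i)))"
proof -
  have "\<forall>J. \<exists>c>0. \<forall>d. (\<forall>v. (\<forall>i\<in>J. a i \<bullet> v \<le> 0) \<longrightarrow> d \<bullet> v \<le> 0) \<longrightarrow>
            norm d \<le> c * (\<Sum>i\<in>J. max 0 (a i \<bullet> d))"
    using cone_bound[of _ a] by auto
  then obtain c where c: "\<And>J. c J > 0"
    "\<And>J d. (\<forall>v. (\<forall>i\<in>J. a i \<bullet> v \<le> 0) \<longrightarrow> d \<bullet> v \<le> 0) \<Longrightarrow>
            norm d \<le> c J * (\<Sum>i\<in>J. max 0 (a i \<bullet> d))"
    by metis
  define H where "H = (\<Sum>J\<in>UNIV. c J)"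
  have Hpos: "H > 0" unfolding H_def using c(1) by (intro sum_pos) auto
  have cH: "c J \<le> H" for J unfolding H_def
    by (rule member_le_sum) (use c(1) less_imp_le in auto)
  show ?thesis
  proof (intro exI[of _ H] conjI allI impI Hpos)
    fix b x assume ne: "\<exists>z. \<forall>i. a i \<bullet> z \<le> b i"
    define P where "P = {z. \<forall>i. a i \<bullet> z \<le> b i}"
    have Pne: "P \<noteq> {}" using ne by (auto simp: P_def)
    have Pcl: "closed P"
    proof -
      have "P = (\<Inter>i. {z. a i \<bullet> z \<le> b i})" by (auto simp: P_def)
      then show ?thesis by (auto intro!: closed_INT closed_halfspace_le)
    qed
    define z where "z = closest_point P x"
    have zP: "z \<in> P" unfolding z_def using closest_point_exists[OF Pcl Pne] by auto
    have zmin: "\<And>w. w \<in> P \<Longrightarrow> dist x z \<le> dist x w"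
      unfolding z_def using closest_point_exists[OF Pcl Pne] by auto
    define J where "J = {i. a i \<bullet> z = b i}"
    define d where "d = x - z"
    have dN: "d \<bullet> v \<le> 0" if v: "\<forall>i\<in>J. a i \<bullet> v \<le> 0" for v
    proof (rule ccontr)
      assume pos: "\<not> d \<bullet> v \<le> 0"
      have ev1: "\<forall>\<^sub>F t in at_right 0. \<forall>i. i \<notin> J \<longrightarrow> a i \<bullet> z + t * (a i \<bullet> v) < b i"
      proof (rule eventually_all_finite)
        fix i
        show "\<forall>\<^sub>F t in at_right 0. i \<notin> J \<longrightarrow> a i \<bullet> z + t * (a i \<bullet> v) < b i"
        proof (cases "i \<in> J")
          case False
          have lt: "a i \<bullet> z < b i" using False zP by (auto simp: J_def P_def less_le)
          have "((\<lambda>t. a i \<bullet> z + t * (a i \<bullet> v)) \<longlongrightarrow> a i \<bullet> z + 0 * (a i \<bullet> v)) (at_right 0)"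
            by (intro tendsto_intros)
          then have "\<forall>\<^sub>F t in at_right 0. a i \<bullet> z + t * (a i \<bullet> v) < b i"
            using lt by (auto dest: order_tendstoD(2))
          then show ?thesis by (auto elim: eventually_mono)
        qed simp
      qed
      have ev2: "\<forall>\<^sub>F t in at_right (0::real). t < (d \<bullet> v) / (norm v ^ 2 + 1)"
        unfolding eventually_at_right_field using pos
        by (intro exI[of _ "(d \<bullet> v) / (norm v ^ 2 + 1)"]) (auto intro!: divide_pos_pos add_nonneg_pos)
      have ev3: "\<forall>\<^sub>F t in at_right (0::real). t > 0"
        by (simp add: eventually_at_right_less)
      obtain t where t: "\<forall>i. i \<notin> J \<longrightarrow> a i \<bullet> z + t * (a i \<bullet> v) < b i"
        "t < (d \<bullet> v) / (norm v ^ 2 + 1)" "t > 0"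
        using eventually_happens'[OF trivial_limit_at_right_real eventually_conj[OF ev1 eventually_conj[OF ev2 ev3]]]
        by blast
      have "z + t *\<^sub>R v \<in> P"
      proof -
        have "a i \<bullet> (z + t *\<^sub>R v) \<le> b i" for i
        proof (cases "i \<in> J")
          case True
          then show ?thesis using v t(3) by (auto simp: J_def inner_add_right mult_nonneg_nonpos)
        next
          case False
          then show ?thesis using t(1) by (auto simp: inner_add_right less_imp_le)
        qed
        then show ?thesis by (auto simp: P_def)
      qed
      then have "dist x z \<le> dist x (z + t *\<^sub>R v)" by (rule zmin)
      then have "norm d \<le> norm (d - t *\<^sub>R v)" by (simp add: dist_norm d_def algebra_simps)
      then have "norm d ^ 2 \<le> norm (d - t *\<^sub>R v) ^ 2" by (simp add: power_mono)
      moreover have "norm (d - t *\<^sub>R v) ^ 2 = norm d ^ 2 - 2 * t * (d \<bullet> v) + t * (t * norm v ^ 2)"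
        unfolding power2_norm_eq_inner by (simp add: inner_diff_left inner_diff_right inner_commute[of v d] algebra_simps)
      ultimately have "0 \<le> t * (t * norm v ^ 2 - 2 * (d \<bullet> v))"
        by (simp add: right_diff_distrib)
      then have A: "2 * (d \<bullet> v) \<le> t * norm v ^ 2" using t(3)
        by (simp add: zero_le_mult_iff)
      have np: "norm v ^ 2 + 1 > 0" by (simp add: add_nonneg_pos)
      have "t * (norm v ^ 2 + 1) < d \<bullet> v" using t(2) pos_less_divide_eq[OF np] by blast
      then have B: "t * norm v ^ 2 + t < d \<bullet> v" by (simp add: distrib_left)
      show False using A B pos t(3) by linarith
    qed
    have "norm d \<le> c J * (\<Sum>i\<in>J. max 0 (a i \<bullet> d))" using c(2)[of J d] dN by blast
    also have "(\<Sum>i\<in>J. max 0 (a i \<bullet> d)) = (\<Sum>i\<in>J. max 0 (a i \<bullet> x - b i))"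
      by (intro sum.cong refl) (auto simp: J_def d_def inner_diff_right)
    also have "\<dots> \<le> (\<Sum>i\<in>UNIV. max 0 (a i \<bullet> x - b i))"
      by (intro sum_mono2) auto
    finally have "norm d \<le> c J * (\<Sum>i\<in>UNIV. max 0 (a i \<bullet> x - b i))"
      using c(1)[of J] by (simp add: mult_left_mono)
    also have "\<dots> \<le> H * (\<Sum>i\<in>UNIV. max 0 (a i \<bullet> x - b i))"
      by (intro mult_right_mono cH sum_nonneg) auto
    finally show "\<exists>z. (\<forall>i. a i \<bullet> z \<le> b i) \<and> norm (x - z) \<le> H * (\<Sum>i\<in>UNIV. max 0 (a i \<bullet> x - b i))"
      using zP by (auto simp: P_def d_def)
  qed
qed


lemma l1_nonneg: "l1norm u \<ge> 0"
  unfolding l1norm_def by (intro sum_nonneg) auto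

lemma l1_add: "l1norm (u + v) \<le> l1norm u + l1norm v"
  unfolding l1norm_def sum.distrib[symmetric] by (intro sum_mono) (simp add: abs_triangle_ineq)

lemma l1_scale: "l1norm (c *\<^sub>R u) = \<bar>c\<bar> * l1norm u"
  unfolding l1norm_def by (simp add: sum_distrib_left abs_mult)

lemma l1_le_norm: "l1norm (u :: real ^ 'k) \<le> real CARD('k) * norm u"
proof -
  have "l1norm u \<le> (\<Sum>i\<in>(UNIV::'k set). norm u)"
    unfolding l1norm_def by (intro sum_mono component_le_norm_cart)
  then show ?thesis by simp
qed

lemma l1_zero: "l1norm (0 :: real ^ 'k) = 0"
  unfolding l1norm_def by simp

lemma small_t:
  fixes Q B :: real
  assumes "B \<ge> 0" "\<And>t. 0 < t \<Longrightarrow> t \<le> 1 \<Longrightarrow> 0 \<le> Q + t * B"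
  shows "0 \<le> Q"
proof (rule ccontr)
  assume "\<not> 0 \<le> Q"
  then have Q: "Q < 0" by simp
  define t where "t = min 1 (- Q / (2 * (B + 1)))"
  have "0 < -Q / (2 * (B + 1))" by (rule divide_pos_pos) (use Q assms(1) in auto)
  then have t0: "0 < t" by (simp add: t_def)
  have t1: "t \<le> 1" by (simp add: t_def)
  have "t * B \<le> (- Q / (2 * (B + 1))) * B"
    by (intro mult_right_mono) (auto simp: t_def assms(1))
  also have "\<dots> < - Q"
  proof -
    have "(- Q / (2 * (B + 1))) * B = - Q * (B / (2 * (B + 1)))" by simp
    also have "\<dots> < - Q * 1"
      using Q assms(1) by (intro mult_strict_left_mono) (auto simp: divide_less_eq)
    finally show ?thesis by simp
  qed
  finally show False using assms(2)[OF t0 t1] by linarith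
qed

lemma VI:
  fixes A :: "real ^ 'n ^ 'm" and W :: "real ^ 'n ^ 'k"
  assumes a: "\<alpha> > 0" and x: "x \<in> lasso_minimizers A W \<alpha> y"
  shows "0 \<le> 2 * ((A *v x - y) \<bullet> (A *v e)) + \<alpha> * (l1norm (W *v (x + e)) - l1norm (W *v x))"
proof (rule small_t)
  show "0 \<le> norm (A *v e) ^ 2" by simp
  fix t :: real assume t: "0 < t" "t \<le> 1"
  define r where "r = A *v x - y"
  have "lasso_obj A W \<alpha> y x \<le> lasso_obj A W \<alpha> y (x + t *\<^sub>R e)"
    using x by (simp add: lasso_minimizers_def)
  moreover have "A *v (x + t *\<^sub>R e) - y = r + t *\<^sub>R (A *v e)"
    by (simp add: r_def matrix_vector_right_distrib matrix_vector_mult_scaleR algebra_simps)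
  moreover have "norm (r + t *\<^sub>R (A *v e)) ^ 2 = norm r ^ 2 + 2 * t * (r \<bullet> (A *v e)) + t * (t * norm (A *v e) ^ 2)"
    unfolding power2_norm_eq_inner by (simp add: inner_add_left inner_add_right inner_commute[of "A *v e" r] algebra_simps)
  moreover have "l1norm (W *v (x + t *\<^sub>R e)) \<le> (1 - t) * l1norm (W *v x) + t * l1norm (W *v (x + e))"
  proof -
    have "W *v (x + t *\<^sub>R e) = (1 - t) *\<^sub>R (W *v x) + t *\<^sub>R (W *v (x + e))"
      by (simp add: matrix_vector_right_distrib matrix_vector_mult_scaleR algebra_simps)
    then show ?thesis using l1_add l1_scale t by (metis abs_of_nonneg diff_ge_0_iff_ge less_imp_le)
  qed
  ultimately have "norm r ^ 2 + \<alpha> * l1norm (W *v x) \<le>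
      norm r ^ 2 + 2 * t * (r \<bullet> (A *v e)) + t * (t * norm (A *v e) ^ 2) + \<alpha> * ((1 - t) * l1norm (W *v x) + t * l1norm (W *v (x + e)))"
    using a unfolding lasso_obj_def r_def by (smt (verit) mult_left_mono)
  then have "0 \<le> t * (2 * (r \<bullet> (A *v e)) + \<alpha> * (l1norm (W *v (x + e)) - l1norm (W *v x)) + t * norm (A *v e) ^ 2)"
    by (simp add: algebra_simps)
  then show "0 \<le> 2 * ((A *v x - y) \<bullet> (A *v e)) + \<alpha> * (l1norm (W *v (x + e)) - l1norm (W *v x)) + t * norm (A *v e) ^ 2"
    using t by (simp add: zero_le_mult_iff r_def)
qed

lemma A_lip:
  fixes A :: "real ^ 'n ^ 'm" and W :: "real ^ 'n ^ 'k"
  assumes a: "\<alpha> > 0" and x: "x \<in> lasso_minimizers A W \<alpha> y" and x': "x' \<in> lasso_minimizers A W \<alpha> y'"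
  shows "norm (A *v x' - A *v x) \<le> norm (y' - y)"
proof -
  define D where "D = A *v x' - A *v x"
  have 1: "0 \<le> 2 * ((A *v x - y) \<bullet> D) + \<alpha> * (l1norm (W *v x') - l1norm (W *v x))"
    using VI[OF a x, of "x' - x"] by (simp add: D_def matrix_vector_mult_diff_distrib)
  have 2: "0 \<le> 2 * ((A *v x' - y') \<bullet> (- D)) + \<alpha> * (l1norm (W *v x) - l1norm (W *v x'))"
    using VI[OF a x', of "x - x'"] by (simp add: D_def matrix_vector_mult_diff_distrib)
  have "0 \<le> ((A *v x - y) \<bullet> D) + ((A *v x' - y') \<bullet> (- D))" using 1 2 by (simp add: algebra_simps)
  also have "\<dots> = (y' - y) \<bullet> D - D \<bullet> D"
    by (simp add: D_def inner_diff_left inner_diff_right algebra_simps)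
  finally have "norm D ^ 2 \<le> (y' - y) \<bullet> D" by (simp add: power2_norm_eq_inner)
  also have "\<dots> \<le> norm (y' - y) * norm D" by (rule norm_cauchy_schwarz)
  finally have "norm D * norm D \<le> norm (y' - y) * norm D" by (simp add: power2_eq_square)
  then show ?thesis unfolding D_def[symmetric]
    by (cases "norm D = 0") (auto simp: mult_le_cancel_right)
qed


definition sgnS :: "'k set \<Rightarrow> 'k \<Rightarrow> real" where
  "sgnS S j = (if j \<in> S then 1 else -1)"

fun hf_a :: "real ^ 'n ^ 'm \<Rightarrow> real ^ 'n ^ 'k \<Rightarrow> ('m \<times> bool) + 'k set \<Rightarrow> real ^ 'n" where
  "hf_a A W (Inl (i, True)) = A $ i"
| "hf_a A W (Inl (i, False)) = - (A $ i)"
| "hf_a A W (Inr S) = (\<Sum>j\<in>UNIV. sgnS S j *\<^sub>R (W $ j))"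

fun hf_b :: "real ^ 'm \<Rightarrow> real \<Rightarrow> ('m \<times> bool) + 'k set \<Rightarrow> real" where
  "hf_b p c (Inl (i, True)) = p $ i"
| "hf_b p c (Inl (i, False)) = - (p $ i)"
| "hf_b p c (Inr S) = c"

lemma hf_Inr: "hf_a A W (Inr S) \<bullet> x = (\<Sum>j\<in>UNIV. sgnS S j * (W *v x) $ j)"
  by (simp add: inner_sum_left matrix_vector_mul_component)

lemma hf_Inr_le: "hf_a A W (Inr S) \<bullet> x \<le> l1norm (W *v x)"
  unfolding hf_Inr l1norm_def by (intro sum_mono) (auto simp: sgnS_def)

lemma hf_Inr_eq: "hf_a A W (Inr {j. (W *v x) $ j \<ge> 0}) \<bullet> x = l1norm (W *v x)"
  unfolding hf_Inr l1norm_def by (intro sum.cong refl) (auto simp: sgnS_def)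

lemma hf_sys:
  "(\<forall>i. hf_a A W i \<bullet> z \<le> hf_b p c i) \<longleftrightarrow> (A *v z = p \<and> l1norm (W *v z) \<le> c)"
proof
  assume h: "\<forall>i. hf_a A W i \<bullet> z \<le> hf_b p c i"
  have "(A *v z) $ i = p $ i" for i
    using h[rule_format, of "Inl (i, True)"] h[rule_format, of "Inl (i, False)"]
    by (simp add: matrix_vector_mul_component)
  then have "A *v z = p" by (simp add: vec_eq_iff)
  moreover have "l1norm (W *v z) \<le> c"
    using h[rule_format, of "Inr {j. (W *v z) $ j \<ge> 0}"] hf_Inr_eq[of A W z] by simp
  ultimately show "A *v z = p \<and> l1norm (W *v z) \<le> c" by simp
next
  assume h: "A *v z = p \<and> l1norm (W *v z) \<le> c"
  show "\<forall>i. hf_a A W i \<bullet> z \<le> hf_b p c i"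
  proof
    fix i show "hf_a A W i \<bullet> z \<le> hf_b p c i"
    proof (cases i)
      case (Inl ib) then show ?thesis using h
        by (cases ib; cases "snd ib") (auto simp: matrix_vector_mul_component[symmetric])
    next
      case (Inr S) then show ?thesis using h hf_Inr_le[of A W S z] by simp
    qed
  qed
qed

lemma hf_resid:
  fixes A :: "real ^ 'n ^ 'm" and W :: "real ^ 'n ^ 'k"
  shows "(\<Sum>i\<in>UNIV. max 0 (hf_a A W i \<bullet> x - hf_b p c i)) \<le>
     real CARD('m) * norm (A *v x - p) + real CARD('k set) * max 0 (l1norm (W *v x) - c)"
proof -
  have U: "(UNIV :: (('m \<times> bool) + 'k set) set) = (UNIV <+> UNIV)" by simp
  define F where "F = (\<lambda>i. max 0 (hf_a A W i \<bullet> x - hf_b p c i))"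
  have "(\<Sum>i\<in>UNIV. F i) = (\<Sum>ib\<in>UNIV. F (Inl ib)) + (\<Sum>S\<in>UNIV. F (Inr S))"
    by (subst U, subst sum.Plus) auto
  also have "(\<Sum>ib\<in>UNIV. F (Inl ib)) = (\<Sum>i\<in>UNIV. F (Inl (i, True)) + F (Inl (i, False)))"
  proof -
    have "(\<Sum>ib\<in>UNIV. F (Inl ib)) = (\<Sum>i\<in>UNIV. \<Sum>b\<in>UNIV. F (Inl (i, b)))"
      unfolding sum.cartesian_product by (simp add: case_prod_unfold)
    then show ?thesis by (simp add: UNIV_bool add.commute)
  qed
  also have "\<dots> = (\<Sum>i\<in>UNIV. \<bar>(A *v x - p) $ i\<bar>)"
    by (intro sum.cong refl) (auto simp: F_def matrix_vector_mul_component max_def)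
  also have "\<dots> = l1norm (A *v x - p)" by (simp add: l1norm_def)
  also have "\<dots> \<le> real CARD('m) * norm (A *v x - p)" by (rule l1_le_norm)
  also have "(\<Sum>S\<in>UNIV. F (Inr S)) \<le> (\<Sum>S\<in>(UNIV::'k set set). max 0 (l1norm (W *v x) - c))"
  proof (intro sum_mono)
    fix S :: "'k set"
    show "F (Inr S) \<le> max 0 (l1norm (W *v x) - c)"
      using hf_Inr_le[of A W S x] unfolding F_def hf_b.simps by (intro max.mono) auto
  qed
  also have "\<dots> = real CARD('k set) * max 0 (l1norm (W *v x) - c)" by simp
  finally show ?thesis by (simp add: F_def)
qed

lemma hoffman_lasso:
  fixes A :: "real ^ 'n ^ 'm" and W :: "real ^ 'n ^ 'k"
  shows "\<exists>H>0. \<forall>p c x. (\<exists>z. A *v z = p \<and> l1norm (W *v z) \<le> c) \<longrightarrow>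
     (\<exists>z. A *v z = p \<and> l1norm (W *v z) \<le> c \<and>
        norm (x - z) \<le> H * (real CARD('m) * norm (A *v x - p) + real CARD('k set) * max 0 (l1norm (W *v x) - c)))"
proof -
  obtain H where H: "H > 0" "\<And>b x. (\<exists>z. \<forall>i. hf_a A W i \<bullet> z \<le> b i) \<Longrightarrow>
     (\<exists>z. (\<forall>i. hf_a A W i \<bullet> z \<le> b i) \<and> norm (x - z) \<le> H * (\<Sum>i\<in>UNIV. max 0 (hf_a A W i \<bullet> x - b i)))"
    using hoffman[of "hf_a A W"] by blast
  show ?thesis
  proof (intro exI[of _ H] conjI allI impI H(1))
    fix p c x assume "\<exists>z. A *v z = p \<and> l1norm (W *v z) \<le> c"
    then have "\<exists>z. \<forall>i. hf_a A W i \<bullet> z \<le> hf_b p c i" by (simp add: hf_sys)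
    from H(2)[OF this, of x] obtain z where z: "\<forall>i. hf_a A W i \<bullet> z \<le> hf_b p c i"
      "norm (x - z) \<le> H * (\<Sum>i\<in>UNIV. max 0 (hf_a A W i \<bullet> x - hf_b p c i))" by blast
    have "norm (x - z) \<le> H * (real CARD('m) * norm (A *v x - p) + real CARD('k set) * max 0 (l1norm (W *v x) - c))"
      using z(2) hf_resid[of A W x p c] H(1) by (smt (verit) mult_left_mono)
    then show "\<exists>z. A *v z = p \<and> l1norm (W *v z) \<le> c \<and>
        norm (x - z) \<le> H * (real CARD('m) * norm (A *v x - p) + real CARD('k set) * max 0 (l1norm (W *v x) - c))"
      using z(1) hf_sys by blast
  qed
qed


lemma lasso_exists:
  fixes A :: "real ^ 'n ^ 'm" and W :: "real ^ 'n ^ 'k"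
  assumes a: "\<alpha> > 0"
  shows "\<exists>x. x \<in> lasso_minimizers A W \<alpha> y"
proof -
  obtain H where H: "H > 0" "\<And>p c x. (\<exists>z. A *v z = p \<and> l1norm (W *v z) \<le> c) \<Longrightarrow>
     (\<exists>z. A *v z = p \<and> l1norm (W *v z) \<le> c \<and>
        norm (x - z) \<le> H * (real CARD('m) * norm (A *v x - p) + real CARD('k set) * max 0 (l1norm (W *v x) - c)))"
    using hoffman_lasso[of A W] by blast
  define f where "f = lasso_obj A W \<alpha> y"
  define R where "R = H * real CARD('m) * (2 * norm y)"
  have R0: "R \<ge> 0" using H(1) by (simp add: R_def)
  have contf: "continuous_on (cball 0 R) f"
  proof -
    have c1: "continuous_on (cball 0 R) (\<lambda>x. A *v x)"
      by (rule linear_continuous_on[OF matrix_vector_mul_bounded_linear])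
    have c2: "continuous_on (cball 0 R) (\<lambda>x. W *v x)"
      by (rule linear_continuous_on[OF matrix_vector_mul_bounded_linear])
    have c3: "continuous_on (cball 0 R) (\<lambda>x. (norm (A *v x - y))\<^sup>2)"
      by (intro continuous_on_power continuous_on_norm continuous_on_diff c1 continuous_on_const)
    have c4: "continuous_on (cball 0 R) (\<lambda>x. \<alpha> * (\<Sum>i\<in>UNIV. \<bar>(W *v x) $ i\<bar>))"
      by (intro continuous_on_mult continuous_on_const continuous_on_sum continuous_on_rabs continuous_on_component c2)
    show ?thesis unfolding f_def lasso_obj_def[abs_def] l1norm_def
      by (rule continuous_on_add[OF c3 c4])
  qed
  obtain xs where xs: "xs \<in> cball 0 R" "\<And>z. z \<in> cball 0 R \<Longrightarrow> f xs \<le> f z"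
  proof -
    have "cball (0::real^'n) R \<noteq> {}" using R0 by simp
    from continuous_attains_inf[OF compact_cball this contf] show ?thesis using that by blast
  qed
  have "f xs \<le> f w" for w
  proof (cases "f w \<le> f 0")
    case False
    have "f xs \<le> f 0" using xs(2)[of 0] R0 by simp
    then show ?thesis using False by simp
  next
    case True
    have f0: "f 0 = norm y ^ 2" by (simp add: f_def lasso_obj_def l1_zero)
    have "norm (A *v w - y) ^ 2 \<le> norm y ^ 2"
    proof -
      have "\<alpha> * l1norm (W *v w) \<ge> 0" using a l1_nonneg[of "W *v w"] by simp
      moreover have "norm (A *v w - y) ^ 2 + \<alpha> * l1norm (W *v w) \<le> norm y ^ 2"
        using True unfolding f0 by (simp add: f_def lasso_obj_def)
      ultimately show ?thesis by linarith
    qed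
    then have "norm (A *v w - y) \<le> norm y" by (rule power2_le_imp_le[OF _ norm_ge_zero])
    moreover have "norm (A *v w) \<le> norm y + norm (A *v w - y)" by (rule norm_triangle_sub)
    ultimately have Aw: "norm (A *v w) \<le> 2 * norm y" by linarith
    obtain z where z: "A *v z = A *v w" "l1norm (W *v z) \<le> l1norm (W *v w)"
      "norm (0 - z) \<le> H * (real CARD('m) * norm (A *v 0 - A *v w) + real CARD('k set) * max 0 (l1norm (W *v 0) - l1norm (W *v w)))"
      using H(2)[of "A *v w" "l1norm (W *v w)" 0] by blast
    have "norm z \<le> H * (real CARD('m) * norm (A *v w))"
      using z(3) l1_nonneg[of "W *v w"] by (simp add: l1_zero norm_minus_commute)
    also have "\<dots> \<le> R"
    proof -
      have "real CARD('m) * norm (A *v w) \<le> real CARD('m) * (2 * norm y)" by (rule mult_left_mono[OF Aw]) simp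
      then have "H * (real CARD('m) * norm (A *v w)) \<le> H * (real CARD('m) * (2 * norm y))"
        by (rule mult_left_mono) (use H(1) in simp)
      then show ?thesis by (simp add: R_def mult.assoc)
    qed
    finally have "z \<in> cball 0 R" by simp
    then have "f xs \<le> f z" by (rule xs(2))
    also have "f z \<le> f w" using z(1,2) a by (simp add: f_def lasso_obj_def)
    finally show ?thesis .
  qed
  then show ?thesis by (auto simp: lasso_minimizers_def f_def)
qed


theorem proposition1:
  fixes A :: "real ^ 'n ^ 'm" and W :: "real ^ 'n ^ 'k" and \<alpha> :: real
  assumes "\<alpha> > 0"
  shows "\<exists>\<kappa>>0. \<forall>y y'. lasso_minimizers A W \<alpha> y' \<subseteq>
           {a + b | a b. a \<in> lasso_minimizers A W \<alpha> y \<and>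
              b \<in> (\<lambda>u. (\<kappa> * norm (y - y')) *\<^sub>R u) ` cball 0 1}"
proof -
  note a = assms
  obtain H where H: "H > 0" "\<And>p c x. (\<exists>z. A *v z = p \<and> l1norm (W *v z) \<le> c) \<Longrightarrow>
     (\<exists>z. A *v z = p \<and> l1norm (W *v z) \<le> c \<and>
        norm (x - z) \<le> H * (real CARD('m) * norm (A *v x - p) + real CARD('k set) * max 0 (l1norm (W *v x) - c)))"
    using hoffman_lasso[of A W] by blast
  obtain B where B: "B > 0" "\<And>x. norm (W *v x) \<le> norm x * B"
    using bounded_linear.pos_bounded[OF matrix_vector_mul_bounded_linear[of W]] by blast
  define m where "m = real CARD('m)"
  define N where "N = real CARD('k set)"
  define K where "K = real CARD('k) * B * H * m"
  define \<kappa> where "\<kappa> = H * (m + N * K)"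
  have m0: "m > 0" by (simp add: m_def)
  have N0: "N \<ge> 0" by (simp add: N_def)
  have K0: "K \<ge> 0" using B(1) H(1) m0 by (simp add: K_def)
  have \<kappa>0: "\<kappa> > 0" using H(1) m0 N0 K0 by (simp add: \<kappa>_def add_pos_nonneg)
  show ?thesis
  proof (intro exI[of _ \<kappa>] conjI allI subsetI \<kappa>0)
    fix y y' x' assume x': "x' \<in> lasso_minimizers A W \<alpha> y'"
    define \<delta> where "\<delta> = norm (y - y')"
    obtain x0 where x0: "x0 \<in> lasso_minimizers A W \<alpha> y" using lasso_exists[OF a] by blast
    define p where "p = A *v x0"
    define c where "c = l1norm (W *v x0)"
    define D where "D = A *v x' - p"
    have Dle: "norm D \<le> \<delta>" using A_lip[OF a x0 x'] by (simp add: D_def p_def \<delta>_def norm_minus_commute)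
    have "\<exists>z. A *v z = D \<and> l1norm (W *v z) \<le> l1norm (W *v (x' - x0))"
      by (intro exI[of _ "x' - x0"]) (simp add: D_def p_def matrix_vector_mult_diff_distrib)
    from H(2)[OF this, of 0] obtain e where e: "A *v e = D"
      "norm (0 - e) \<le> H * (m * norm (A *v 0 - D) + N * max 0 (l1norm (W *v 0) - l1norm (W *v (x' - x0))))"
      unfolding m_def N_def by blast
    have enorm: "norm e \<le> H * m * norm D"
      using e(2) l1_nonneg[of "W *v (x' - x0)"] by (simp add: l1_zero mult.assoc)
    have 1: "0 \<le> 2 * ((A *v x' - y') \<bullet> D) + \<alpha> * (l1norm (W *v (x' + e)) - l1norm (W *v x'))"
      using VI[OF a x', of e] e(1) by simp
    have 2: "0 \<le> 2 * ((A *v x' - y') \<bullet> (- D)) + \<alpha> * (l1norm (W *v x0) - l1norm (W *v x'))"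
      using VI[OF a x', of "x0 - x'"] by (simp add: D_def p_def matrix_vector_mult_diff_distrib)
    have "l1norm (W *v (x' + e)) \<le> l1norm (W *v x') + l1norm (W *v e)"
      by (simp add: matrix_vector_right_distrib l1_add)
    then have "\<alpha> * (l1norm (W *v x') - c) \<le> \<alpha> * l1norm (W *v e)"
    proof -
      have "\<alpha> * l1norm (W *v (x' + e)) \<le> \<alpha> * (l1norm (W *v x') + l1norm (W *v e))"
        using \<open>l1norm (W *v (x' + e)) \<le> _\<close> a by (intro mult_left_mono) auto
      moreover have "(A *v x' - y') \<bullet> (- D) = - ((A *v x' - y') \<bullet> D)" by simp
      ultimately show ?thesis using 1 2 unfolding c_def by (simp only: distrib_left right_diff_distrib)
    qed
    then have gle: "l1norm (W *v x') - c \<le> l1norm (W *v e)" using a by simp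
    have "l1norm (W *v e) \<le> real CARD('k) * norm (W *v e)" by (rule l1_le_norm)
    also have "\<dots> \<le> real CARD('k) * (norm e * B)" by (intro mult_left_mono B(2)) simp
    also have "\<dots> \<le> real CARD('k) * ((H * m * norm D) * B)"
      using B(1) enorm by (intro mult_left_mono mult_right_mono) auto
    also have "\<dots> = K * norm D" by (simp add: K_def)
    also have "\<dots> \<le> K * \<delta>" by (rule mult_left_mono[OF Dle K0])
    finally have cK: "max 0 (l1norm (W *v x') - c) \<le> K * \<delta>" using gle K0 \<delta>_def by simp
    have "\<exists>z. A *v z = p \<and> l1norm (W *v z) \<le> c" using p_def c_def by blast
    from H(2)[OF this, of x'] obtain z where z: "A *v z = p" "l1norm (W *v z) \<le> c"
      "norm (x' - z) \<le> H * (m * norm D + N * max 0 (l1norm (W *v x') - c))"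
      unfolding m_def N_def D_def by blast
    have "m * norm D + N * max 0 (l1norm (W *v x') - c) \<le> m * \<delta> + N * (K * \<delta>)"
      using m0 N0 Dle cK by (intro add_mono mult_left_mono) auto
    then have zd: "norm (x' - z) \<le> \<kappa> * \<delta>"
      using z(3) H(1) unfolding \<kappa>_def by (smt (verit) distrib_left mult.assoc mult.commute mult_left_mono)
    have zmin: "z \<in> lasso_minimizers A W \<alpha> y"
    proof -
      have "lasso_obj A W \<alpha> y z \<le> lasso_obj A W \<alpha> y x0"
        using z(1,2) a by (simp add: lasso_obj_def p_def c_def)
      then show ?thesis using x0 by (auto simp: lasso_minimizers_def intro: order.trans)
    qed
    have bmem: "x' - z \<in> (\<lambda>u. (\<kappa> * norm (y - y')) *\<^sub>R u) ` cball 0 1"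
    proof (cases "\<kappa> * \<delta> = 0")
      case True
      then have "norm (x' - z) \<le> 0" using zd by (simp only:)
      then have "x' - z = 0" by simp
      then show ?thesis using True by (auto simp: \<delta>_def intro!: image_eqI[of _ _ 0])
    next
      case False
      have pos: "\<kappa> * \<delta> > 0" using False \<kappa>0 by (simp add: \<delta>_def)
      show ?thesis
      proof (rule image_eqI[of _ _ "(1 / (\<kappa> * \<delta>)) *\<^sub>R (x' - z)"])
        show "x' - z = (\<kappa> * norm (y - y')) *\<^sub>R ((1 / (\<kappa> * \<delta>)) *\<^sub>R (x' - z))"
        proof -
          have q: "\<And>q. q > 0 \<Longrightarrow> q *\<^sub>R ((1 / q) *\<^sub>R (x' - z)) = x' - z" by simp
          have "(\<kappa> * \<delta>) *\<^sub>R ((1 / (\<kappa> * \<delta>)) *\<^sub>R (x' - z)) = x' - z" by (rule q[OF pos])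
          from this[symmetric] show ?thesis by (simp only: \<delta>_def)
        qed
        show "(1 / (\<kappa> * \<delta>)) *\<^sub>R (x' - z) \<in> cball 0 1"
          using zd pos by (simp add: divide_le_eq)
      qed
    qed
    show "x' \<in> {a + b | a b. a \<in> lasso_minimizers A W \<alpha> y \<and>
              b \<in> (\<lambda>u. (\<kappa> * norm (y - y')) *\<^sub>R u) ` cball 0 1}"
      using zmin bmem by (intro CollectI exI[of _ z] exI[of _ "x' - z"]) simp
  qed
qed

end
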